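(* Let $k\ge 3$ and let $n\ge k-1$ be an integer. If $\nu_k(n)=0$, then $n-k+3$ is prime.
   Context: For an integer $k\ge 3$ and a positive integer $n$, $\nu_k(n)$ denotes the number of $k$-tuples of integers $(x_1,\dots,x_k)$ with $1\le x_1\le x_2\le\dots\le x_k$ such that $x_1x_2\cdots x_k+x_1+x_2+\dots+x_k=n$. *)

theory Defs
  imports "HOL-Computational_Algebra.Primes"
begin

definition nu :: "nat \<Rightarrow> nat \<Rightarrow> nat" where
  "nu k n = card {xs :: nat list. length xs = k \<and> sorted xs \<and> (\<forall>x\<in>set xs. 1 \<le> x)
                    \<and> prod_list xs + sum_list xs = n}"

end

theory Submission
  imports Defs
begin

lemma nu_set_finite:
  "finite {xs :: nat list. length xs = k \<and> sorted xs \<and> (\<forall>x\<in>set xs. 1 \<le> x)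
                    \<and> prod_list xs + sum_list xs = n}" (is "finite ?S")
proof (rule finite_subset)
  show "?S \<subseteq> {xs. set xs \<subseteq> {..n} \<and> length xs = k}"
  proof
    fix xs assume "xs \<in> ?S"
    hence "\<forall>x\<in>set xs. x \<le> sum_list xs" "sum_list xs \<le> n" "length xs = k"
      by (auto simp: member_le_sum_list)
    thus "xs \<in> {xs. set xs \<subseteq> {..n} \<and> length xs = k}" by fastforce
  qed
  show "finite {xs. set xs \<subseteq> {..n} \<and> length xs = k}"
    by (rule finite_lists_length_eq) simp
qed

theorem proposition2:
  fixes k n :: nat
  assumes "k \<ge> 3" and "n + 1 \<ge> k" and "nu k n = 0"
  shows "prime (n + 3 - k)"
proof (rule ccontr)
  define m where "m = n + 3 - k"
  assume np: "\<not> prime (n + 3 - k)"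
  have m2: "m \<ge> 2" using assms unfolding m_def by simp
  from np m2 obtain d where d: "d dvd m" "d \<noteq> 1" "d \<noteq> m"
    unfolding m_def prime_nat_iff by auto
  then obtain e where e: "m = d * e" by blast
  have "d \<noteq> 0" using e m2 by (cases "d = 0") simp_all
  moreover have "e \<noteq> 0" using e m2 by (cases "e = 0") simp_all
  moreover have "e \<noteq> 1" using d e by auto
  ultimately have d2: "d \<ge> 2" and e2: "e \<ge> 2" using d(2) by linarith+
  define a where "a = min d e"
  define b where "b = max d e"
  have ab: "a \<ge> 2" "b \<ge> 2" "a \<le> b" "a * b = m"
    using d2 e2 e unfolding a_def b_def by (auto simp: min_def max_def)
  obtain a' b' where a': "a = a' + 2" and b': "b = b' + 2" using ab
    by (metis add.commute le_Suc_ex)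
  define xs where "xs = replicate (k - 2) (1::nat) @ [a' + 1, b' + 1]"
  have len: "length xs = k" using assms unfolding xs_def by simp
  have sorted: "sorted xs" using ab a' b' unfolding xs_def
    by (simp add: sorted_append)
  have pos: "\<forall>x\<in>set xs. 1 \<le> x" unfolding xs_def by auto
  have "prod_list xs + sum_list xs = (a' + 1) * (b' + 1) + (k - 2) + (a' + 1) + (b' + 1)"
    unfolding xs_def by (simp add: sum_list_replicate)
  also have "\<dots> = n"
  proof -
    have "(a' + 2) * (b' + 2) + k = n + 3" using ab a' b' assms unfolding m_def by simp
    thus ?thesis using assms by (simp add: algebra_simps)
  qed
  finally have "xs \<in> {xs :: nat list. length xs = k \<and> sorted xs \<and> (\<forall>x\<in>set xs. 1 \<le> x)
                    \<and> prod_list xs + sum_list xs = n}" using len sorted pos by simp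
  hence "{xs :: nat list. length xs = k \<and> sorted xs \<and> (\<forall>x\<in>set xs. 1 \<le> x)
                    \<and> prod_list xs + sum_list xs = n} \<noteq> {}" by blast
  hence "nu k n \<noteq> 0" unfolding nu_def using nu_set_finite by simp
  thus False using assms by simp
qed

end
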